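(* For every integer $n\ge4$, $$D_3(n)=2A(n-3)-2A(n-1)+2A(n).$$
   Context: $A(n)$ is the number of partitions of $n$ into distinct parts. $D_3(n)$ is the number of partitions of $n$ into non-negative parts (the part $0$ is allowed) in which the smallest part appears exactly $3$ times and no other part is repeated. *)

theory Defs
  imports Main "HOL-Library.Multiset"
begin

definition A :: "nat \<Rightarrow> nat" where
  "A n = card {M :: nat multiset. sum_mset M = n \<and> 0 \<notin># M \<and> (\<forall>x\<in>#M. count M x = 1)}"

definition D3 :: "nat \<Rightarrow> nat" where
  "D3 n = card {M :: nat multiset. sum_mset M = n \<and> M \<noteq> {#} \<and>
      count M (Min (set_mset M)) = 3 \<and>
      (\<forall>x\<in>#M. x \<noteq> Min (set_mset M) \<longrightarrow> count M x = 1)}"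

end

theory Submission
  imports Defs
begin

definition Qset :: "nat \<Rightarrow> nat \<Rightarrow> nat set set" where
  "Qset s m = {S. finite S \<and> S \<subseteq> {Suc s..} \<and> \<Sum>S = m}"

definition Q :: "nat \<Rightarrow> nat \<Rightarrow> nat" where
  "Q s m = card (Qset s m)"

lemma elem_le_sum: "finite S \<Longrightarrow> x \<in> S \<Longrightarrow> x \<le> \<Sum>S" for S :: "nat set"
  by (metis member_le_sum zero_le)

lemma Qset_sub: "Qset s m \<subseteq> Pow {Suc s..m}"
  unfolding Qset_def using elem_le_sum by fastforce

lemma Qset_finite: "finite (Qset s m)"
  using Qset_sub finite_subset by (metis finite_Pow_iff finite_atLeastAtMost)

lemma Q_small: "m \<le> s \<Longrightarrow> Q s m = (if m = 0 then 1 else 0)"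
proof -
  assume a: "m \<le> s"
  have "Qset s m = (if m = 0 then {{}} else {})"
  proof (cases "m = 0")
    case True
    then show ?thesis unfolding Qset_def by (fastforce simp: subset_iff)
  next
    case False
    { fix S assume S: "S \<in> Qset s m"
      then have "S \<noteq> {}" using False unfolding Qset_def by auto
      then obtain x where "x \<in> S" by auto
      then have "x \<le> m" "x \<ge> Suc s" using S elem_le_sum unfolding Qset_def by auto
      then have False using a by simp }
    then show ?thesis using False by auto
  qed
  then show ?thesis unfolding Q_def by simp
qed

lemma Q_rec: "Q s m = Q (Suc s) m + (if Suc s \<le> m then Q (Suc s) (m - Suc s) else 0)"
proof -
  let ?X = "{S \<in> Qset s m. Suc s \<notin> S}"
  let ?Y = "{S \<in> Qset s m. Suc s \<in> S}"
  have split: "Qset s m = ?X \<union> ?Y" by auto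
  have X: "?X = Qset (Suc s) m" unfolding Qset_def by (auto simp: subset_iff Suc_le_eq order.order_iff_strict)
  have Y: "?Y = (if Suc s \<le> m then insert (Suc s) ` Qset (Suc s) (m - Suc s) else {})"
  proof (cases "Suc s \<le> m")
    case True
    have "?Y \<subseteq> insert (Suc s) ` Qset (Suc s) (m - Suc s)"
    proof
      fix S assume S: "S \<in> ?Y"
      let ?S' = "S - {Suc s}"
      have "finite S" "S \<subseteq> {Suc s..}" "\<Sum>S = m" "Suc s \<in> S" using S unfolding Qset_def by auto
      then have "?S' \<in> Qset (Suc s) (m - Suc s)" unfolding Qset_def
        by (auto simp: sum_diff1_nat subset_iff Suc_le_eq order.order_iff_strict)
      moreover have "S = insert (Suc s) ?S'" using \<open>Suc s \<in> S\<close> by auto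
      ultimately show "S \<in> insert (Suc s) ` Qset (Suc s) (m - Suc s)" by blast
    qed
    moreover have "insert (Suc s) ` Qset (Suc s) (m - Suc s) \<subseteq> ?Y"
    proof
      fix S assume "S \<in> insert (Suc s) ` Qset (Suc s) (m - Suc s)"
      then obtain T where T: "S = insert (Suc s) T" "finite T" "T \<subseteq> {Suc (Suc s)..}" "\<Sum>T = m - Suc s"
        unfolding Qset_def by auto
      have "Suc s \<notin> T" using T(3) by auto
      then have "\<Sum>S = m" using T True by simp
      then show "S \<in> ?Y" using T unfolding Qset_def by auto
    qed
    ultimately show ?thesis using True by auto
  next
    case False
    { fix S assume S: "S \<in> ?Y"
      then have "Suc s \<le> m" using elem_le_sum unfolding Qset_def by blast
      then have False using False by simp }
    then show ?thesis using False by auto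
  qed
  have inj: "inj_on (insert (Suc s)) (Qset (Suc s) k)" for k
  proof (rule inj_onI)
    fix X Y assume X: "X \<in> Qset (Suc s) k" and Y: "Y \<in> Qset (Suc s) k" and e: "insert (Suc s) X = insert (Suc s) Y"
    have "Suc s \<notin> X" "Suc s \<notin> Y" using X Y unfolding Qset_def by auto
    then show "X = Y" using e by (metis insert_ident)
  qed
  have "card (Qset s m) = card ?X + card ?Y"
    by (subst split, rule card_Un_disjoint) (use Qset_finite in auto)
  then show ?thesis unfolding Q_def using X Y card_image[OF inj] by auto
qed

definition Qz :: "nat \<Rightarrow> int \<Rightarrow> int" where
  "Qz s k = (if k < 0 then 0 else int (Q s (nat k)))"

lemma Qz_rec: "j = k - int s - 1 \<Longrightarrow> Qz s k = Qz (Suc s) k + Qz (Suc s) j"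
proof -
  assume j: "j = k - int s - 1"
  show ?thesis
  proof (cases "k < 0")
    case True then show ?thesis using j by (simp add: Qz_def)
  next
    case False
    then show ?thesis using j Q_rec[of s "nat k"]
      by (auto simp: Qz_def nat_diff_distrib)
  qed
qed

definition T :: "nat \<Rightarrow> int \<Rightarrow> int" where
  "T s k = Qz s (k - 3 * int s) + Qz s (k - 2 - 2 * int s) + Qz s (k - 3 - int s)
     - Qz s (k - 1 - int s) + Qz s k - Qz s (k - 1) - Qz s (k - 2) + Qz s (k - 3)"

lemma T_step: "T s k - T (Suc s) k = Qz s (k - 3 * int s)"
proof -
  define t where "t = int s"
  have Ts: "T (Suc s) k = Qz (Suc s) (k - 3 - 3 * t) + Qz (Suc s) (k - 4 - 2 * t) + Qz (Suc s) (k - 4 - t)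
     - Qz (Suc s) (k - 2 - t) + Qz (Suc s) k - Qz (Suc s) (k - 1) - Qz (Suc s) (k - 2) + Qz (Suc s) (k - 3)"
    unfolding T_def t_def by (simp add: algebra_simps)
  have T0: "T s k = Qz s (k - 3 * t) + Qz s (k - 2 - 2 * t) + Qz s (k - 3 - t)
     - Qz s (k - 1 - t) + Qz s k - Qz s (k - 1) - Qz s (k - 2) + Qz s (k - 3)"
    unfolding T_def t_def by simp
  have e1: "Qz s (k - 3 * t) = Qz (Suc s) (k - 3 * t) + Qz (Suc s) (k - 1 - 4 * t)"
    by (rule Qz_rec) (simp add: t_def)
  have e2: "Qz s (k - 2 - 2 * t) = Qz (Suc s) (k - 2 - 2 * t) + Qz (Suc s) (k - 3 - 3 * t)"
    by (rule Qz_rec) (simp add: t_def)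
  have e3: "Qz s (k - 3 - t) = Qz (Suc s) (k - 3 - t) + Qz (Suc s) (k - 4 - 2 * t)"
    by (rule Qz_rec) (simp add: t_def)
  have e4: "Qz s (k - 1 - t) = Qz (Suc s) (k - 1 - t) + Qz (Suc s) (k - 2 - 2 * t)"
    by (rule Qz_rec) (simp add: t_def)
  have e5: "Qz s k = Qz (Suc s) k + Qz (Suc s) (k - 1 - t)"
    by (rule Qz_rec) (simp add: t_def)
  have e6: "Qz s (k - 1) = Qz (Suc s) (k - 1) + Qz (Suc s) (k - 2 - t)"
    by (rule Qz_rec) (simp add: t_def)
  have e7: "Qz s (k - 2) = Qz (Suc s) (k - 2) + Qz (Suc s) (k - 3 - t)"
    by (rule Qz_rec) (simp add: t_def)
  have e8: "Qz s (k - 3) = Qz (Suc s) (k - 3) + Qz (Suc s) (k - 4 - t)"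
    by (rule Qz_rec) (simp add: t_def)
  show ?thesis unfolding t_def[symmetric] using Ts T0 e1 e2 e3 e4 e5 e6 e7 e8 by linarith
qed

lemma T_zero: "4 \<le> n \<Longrightarrow> n \<le> s \<Longrightarrow> T s (int n) = 0"
  unfolding T_def Qz_def using Q_small by (auto simp: nat_diff_distrib)

lemma sum_Qz: "4 \<le> n \<Longrightarrow> (\<Sum>s<Suc n. Qz s (int n - 3 * int s)) = T 0 (int n)"
proof -
  assume n: "4 \<le> n"
  have "(\<Sum>s<Suc n. Qz s (int n - 3 * int s)) = (\<Sum>s<Suc n. T s (int n) - T (Suc s) (int n))"
    using T_step by simp
  also have "\<dots> = T 0 (int n) - T (Suc n) (int n)"
    using sum_lessThan_telescope'[of "\<lambda>s. T s (int n)" "Suc n"] by simp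
  also have "\<dots> = T 0 (int n)" using T_zero[OF n, of "Suc n"] by simp
  finally show ?thesis .
qed

lemma count_mset_set': "finite S \<Longrightarrow> count (mset_set S) x = (if x \<in> S then 1 else 0)"
  by simp

lemma A_Q: "A n = Q 0 n"
proof -
  have eq: "{M :: nat multiset. sum_mset M = n \<and> 0 \<notin># M \<and> (\<forall>x\<in>#M. count M x = 1)} = mset_set ` Qset 0 n"
  proof (intro equalityI subsetI)
    fix M :: "nat multiset" assume M: "M \<in> {M. sum_mset M = n \<and> 0 \<notin># M \<and> (\<forall>x\<in>#M. count M x = 1)}"
    have "M = mset_set (set_mset M)"
    proof (rule multiset_eqI)
      fix x show "count M x = count (mset_set (set_mset M)) x"
        using M by (cases "x \<in># M") (auto simp: count_eq_zero_iff)
    qed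
    moreover have "set_mset M \<in> Qset 0 n"
    proof -
      have "\<Sum>(set_mset M) = sum_mset M"
        by (subst (2) \<open>M = mset_set (set_mset M)\<close>) (simp add: sum_unfold_sum_mset)
      then show ?thesis using M unfolding Qset_def by (auto simp: Suc_le_eq intro: gr0I)
    qed
    ultimately show "M \<in> mset_set ` Qset 0 n" by blast
  next
    fix M assume "M \<in> mset_set ` Qset 0 n"
    then obtain S where S: "M = mset_set S" "finite S" "S \<subseteq> {Suc 0..}" "\<Sum>S = n"
      unfolding Qset_def by auto
    then show "M \<in> {M. sum_mset M = n \<and> 0 \<notin># M \<and> (\<forall>x\<in>#M. count M x = 1)}"
      by (auto simp: sum_unfold_sum_mset)
  qed
  have "inj_on mset_set (Qset 0 n)"
    unfolding Qset_def by (rule inj_onI) (metis finite_set_mset_mset_set mem_Collect_eq)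
  then show ?thesis unfolding A_def Q_def eq by (simp add: card_image)
qed

definition fD :: "nat \<times> nat set \<Rightarrow> nat multiset" where
  "fD p = replicate_mset 3 (fst p) + mset_set (snd p)"

lemma fD_props:
  assumes "finite S" "S \<subseteq> {Suc s..}"
  shows "set_mset (fD (s, S)) = insert s S"
    and "Min (set_mset (fD (s, S))) = s"
    and "count (fD (s, S)) s = 3"
    and "x \<noteq> s \<Longrightarrow> count (fD (s, S)) x = (if x \<in> S then 1 else 0)"
    and "sum_mset (fD (s, S)) = 3 * s + \<Sum>S"
proof -
  show a: "set_mset (fD (s, S)) = insert s S" using assms by (auto simp: fD_def)
  show "Min (set_mset (fD (s, S))) = s" unfolding a
    using assms by (intro Min_eqI) auto
  have "s \<notin> S" using assms by auto
  then show "count (fD (s, S)) s = 3" using assms by (simp add: fD_def)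
  show "x \<noteq> s \<Longrightarrow> count (fD (s, S)) x = (if x \<in> S then 1 else 0)"
    using assms by (simp add: fD_def)
  show "sum_mset (fD (s, S)) = 3 * s + \<Sum>S"
    using assms by (simp add: fD_def sum_unfold_sum_mset)
qed

lemma D3_sum: "D3 n = (\<Sum>s\<in>{s. 3 * s \<le> n}. Q s (n - 3 * s))"
proof -
  let ?D = "{M :: nat multiset. sum_mset M = n \<and> M \<noteq> {#} \<and>
      count M (Min (set_mset M)) = 3 \<and>
      (\<forall>x\<in>#M. x \<noteq> Min (set_mset M) \<longrightarrow> count M x = 1)}"
  let ?I = "{s. 3 * s \<le> n}"
  let ?G = "Sigma ?I (\<lambda>s. Qset s (n - 3 * s))"
  have finI: "finite ?I" by (rule finite_subset[of _ "{..n}"]) auto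
  have eq: "?D = fD ` ?G"
  proof (intro equalityI subsetI)
    fix M assume M: "M \<in> ?D"
    define s where "s = Min (set_mset M)"
    define S where "S = set_mset M - {s}"
    have ne: "set_mset M \<noteq> {}" using M by auto
    have sM: "s \<in># M" unfolding s_def using ne by (intro Min_in) auto
    have fS: "finite S" unfolding S_def by simp
    have Ssub: "S \<subseteq> {Suc s..}"
    proof
      fix x assume "x \<in> S"
      then have "x \<in># M" "x \<noteq> s" unfolding S_def by auto
      moreover have "s \<le> x" unfolding s_def using \<open>x \<in># M\<close> by simp
      ultimately show "x \<in> {Suc s..}" by auto
    qed
    have Meq: "M = fD (s, S)"
    proof (rule multiset_eqI)
      fix x show "count M x = count (fD (s, S)) x"
      proof (cases "x = s")
        case True then show ?thesis using M fD_props(3)[OF fS Ssub] unfolding s_def by simp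
      next
        case False
        have c: "count (fD (s, S)) x = (if x \<in> S then 1 else 0)" using fD_props(4)[OF fS Ssub False] .
        show ?thesis
        proof (cases "x \<in># M")
          case True
          then have "x \<in> S" using False unfolding S_def by auto
          then show ?thesis using c M True False unfolding s_def by auto
        next
          case xn: False
          then have "x \<notin> S" unfolding S_def by auto
          then show ?thesis using c xn by (simp add: not_in_iff)
        qed
      qed
    qed
    have "sum_mset M = 3 * s + \<Sum>S" using Meq fD_props(5)[OF fS Ssub] by simp
    then have "3 * s \<le> n" "\<Sum>S = n - 3 * s" using M by auto
    then have "(s, S) \<in> ?G" using fS Ssub unfolding Qset_def by auto
    then show "M \<in> fD ` ?G" using Meq by blast
  next
    fix M assume "M \<in> fD ` ?G"
    then obtain s S where M: "M = fD (s, S)" and s: "3 * s \<le> n" and S: "S \<in> Qset s (n - 3 * s)"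
      by auto
    have fS: "finite S" and Ssub: "S \<subseteq> {Suc s..}" and sS: "\<Sum>S = n - 3 * s"
      using S unfolding Qset_def by auto
    note P = fD_props[OF fS Ssub]
    show "M \<in> ?D" unfolding M
    proof (intro CollectI conjI ballI impI)
      show "sum_mset (fD (s, S)) = n" using P(5) sS s by simp
      show "fD (s, S) \<noteq> {#}" using P(1) by (metis empty_not_insert set_mset_empty)
      show "count (fD (s, S)) (Min (set_mset (fD (s, S)))) = 3" using P(2,3) by simp
      fix x assume "x \<in># fD (s, S)" "x \<noteq> Min (set_mset (fD (s, S)))"
      then show "count (fD (s, S)) x = 1" using P(1,2,4) by auto
    qed
  qed
  have inj: "inj_on fD ?G"
  proof (rule inj_onI)
    fix p q assume p: "p \<in> ?G" and q: "q \<in> ?G" and e: "fD p = fD q"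
    obtain s S where ps: "p = (s, S)" by (cases p)
    obtain t T where qt: "q = (t, T)" by (cases q)
    have fS: "finite S" "S \<subseteq> {Suc s..}" using p ps unfolding Qset_def by auto
    have fT: "finite T" "T \<subseteq> {Suc t..}" using q qt unfolding Qset_def by auto
    have st: "s = t" using fD_props(2)[OF fS] fD_props(2)[OF fT] e ps qt by metis
    have "insert s S = insert t T" using fD_props(1)[OF fS] fD_props(1)[OF fT] e ps qt by metis
    moreover have "s \<notin> S" "t \<notin> T" using fS fT by auto
    ultimately have "S = T" using st by (metis insert_ident)
    then show "p = q" using ps qt st by simp
  qed
  have "D3 n = card ?G" unfolding D3_def eq using card_image[OF inj] by simp
  also have "\<dots> = (\<Sum>s\<in>?I. card (Qset s (n - 3 * s)))"
    by (rule card_SigmaI) (use finI Qset_finite in auto)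
  finally show ?thesis unfolding Q_def .
qed

theorem corollary13:
  fixes n :: nat
  assumes "n \<ge> 4"
  shows "int (D3 n) = 2 * int (A (n - 3)) - 2 * int (A (n - 1)) + 2 * int (A n)"
proof -
  have "int (D3 n) = (\<Sum>s\<in>{s. 3 * s \<le> n}. int (Q s (n - 3 * s)))"
    unfolding D3_sum by simp
  also have "\<dots> = (\<Sum>s\<in>{..<Suc n}. Qz s (int n - 3 * int s))"
  proof (rule sum.mono_neutral_cong_left)
    show "finite {..<Suc n}" by simp
    show "{s. 3 * s \<le> n} \<subseteq> {..<Suc n}" by auto
    show "\<forall>i\<in>{..<Suc n} - {s. 3 * s \<le> n}. Qz i (int n - 3 * int i) = 0"
      by (auto simp: Qz_def)
    show "\<And>x. x \<in> {s. 3 * s \<le> n} \<Longrightarrow> int (Q x (n - 3 * x)) = Qz x (int n - 3 * int x)"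
    proof -
      fix x assume "x \<in> {s. 3 * s \<le> n}"
      then have e: "int n - 3 * int x = int (n - 3 * x)" by (simp add: of_nat_diff)
      have "Qz x (int (n - 3 * x)) = int (Q x (n - 3 * x))" unfolding Qz_def by simp
      then show "int (Q x (n - 3 * x)) = Qz x (int n - 3 * int x)" unfolding e by simp
    qed
  qed
  also have "\<dots> = T 0 (int n)" using sum_Qz assms by simp
  also have "\<dots> = 2 * Qz 0 (int n) - 2 * Qz 0 (int n - 1) + 2 * Qz 0 (int n - 3)"
    unfolding T_def by simp
  also have "\<dots> = 2 * int (A (n - 3)) - 2 * int (A (n - 1)) + 2 * int (A n)"
  proof -
    have h: "nat (int n - 1) = n - 1" "nat (int n - 3) = n - 3" using assms by auto
    show ?thesis using assms by (simp add: Qz_def A_Q h)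
  qed
  finally show ?thesis .
qed

end
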